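(* Let $k\le l$ be positive integers with $\gcd(k,l)=1$, let $n\ge 1$ and $m\ge 0$ be integers, and write $m=qn+r$ with integers $q\ge 0$ and $0\le r<n$. Let $S$ be the minimum of $x+y$ over all integers $x,y$ satisfying $$qxy+r(xl+yk)\ge klnr,\qquad x\ge rk,\qquad y\ge rl.$$ Then $$L^{k,l}(m,n)=nkq+\min(nk,\,S).$$
   Context: $\mathcal D^{k,l}(m,n)$ denotes the set of all $nk\times nl$ matrices with nonnegative integer entries all of whose row sums equal $ml$ and all of whose column sums equal $mk$. For an $s\times t$ matrix $A=(a_{ij})$ with $s\le t$, a transversal of $A$ is a set of entries $T=\{a_{1i_1},\dots,a_{si_s}\}$ taken from distinct columns (i.e. $i_1,\dots,i_s\in\{1,\dots,t\}$ pairwise distinct), and $|T|=a_{1i_1}+\cdots+a_{si_s}$; if $s>t$, the transversals of $A$ are defined to be those of its transpose. The tropical determinant is ${\rm tdet}(A)=\max_T |T|$ over all transversals $T$ of $A$. Finally $L^{k,l}(m,n)=\min_{A\in\mathcal D^{k,l}(m,n)}{\rm tdet}(A)$. *)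

theory Defs
  imports Main
begin

text \<open>Matrices are functions nat => nat => nat; an s x t matrix uses indices i < s, j < t.
  Entries outside the range are required to be 0 in D so that the set is finite.\<close>

definition tdet :: "nat \<Rightarrow> nat \<Rightarrow> (nat \<Rightarrow> nat \<Rightarrow> nat) \<Rightarrow> nat" where
  "tdet s t A =
    (if s \<le> t then
       Max {(\<Sum>i<s. A i (f i)) | f. inj_on f {..<s} \<and> f ` {..<s} \<subseteq> {..<t}}
     else
       Max {(\<Sum>j<t. A (g j) j) | g. inj_on g {..<t} \<and> g ` {..<t} \<subseteq> {..<s}})"

definition Dset :: "nat \<Rightarrow> nat \<Rightarrow> nat \<Rightarrow> nat \<Rightarrow> (nat \<Rightarrow> nat \<Rightarrow> nat) set" where
  "Dset k l m n =
    {A. (\<forall>i j. (i \<ge> n * k \<or> j \<ge> n * l) \<longrightarrow> A i j = 0)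
      \<and> (\<forall>i < n * k. (\<Sum>j < n * l. A i j) = m * l)
      \<and> (\<forall>j < n * l. (\<Sum>i < n * k. A i j) = m * k)}"

definition Lkl :: "nat \<Rightarrow> nat \<Rightarrow> nat \<Rightarrow> nat \<Rightarrow> nat" where
  "Lkl k l m n = Min (tdet (n * k) (n * l) ` Dset k l m n)"

end

theory Submission
  imports Defs "HOL-Library.FuncSet"
begin


definition cnt :: "nat \<Rightarrow> nat \<Rightarrow> nat \<Rightarrow> nat \<Rightarrow> nat" where
  "cnt P len w j = (\<Sum>t<len. if (P + t) mod w = j then 1 else 0)"

lemma cnt_add: "cnt P (a + b) w j = cnt P a w j + cnt (P + a) b w j"
  unfolding cnt_def
  by (induction b) (simp_all add: add.assoc)

lemma cnt_mono: "a \<le> b \<Longrightarrow> cnt P a w j \<le> cnt P b w j"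
  using cnt_add[of P a "b - a" w j] by simp

lemma cnt_shift1: "cnt (Suc Z) w w j = cnt Z w w j"
proof -
  have "cnt Z (Suc w) w j = cnt Z w w j + (if (Z + w) mod w = j then 1 else 0)"
    unfolding cnt_def by simp
  moreover have "cnt Z (Suc w) w j = (if Z mod w = j then 1 else 0) + cnt (Suc Z) w w j"
    unfolding cnt_def by (subst sum.lessThan_Suc_shift) simp
  ultimately show ?thesis by simp
qed

lemma cnt_window: "j < w \<Longrightarrow> cnt Z w w j = 1"
proof (induction Z)
  case 0
  have "cnt 0 w w j = (\<Sum>t<w. if t = j then 1 else 0)"
    unfolding cnt_def by (intro sum.cong) auto
  also have "\<dots> = 1" using 0 by (simp add: sum.delta)
  finally show ?case .
next
  case (Suc Z) then show ?case by (simp add: cnt_shift1)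
qed

lemma cnt_mult: "j < w \<Longrightarrow> cnt P (c * w) w j = c"
proof (induction c arbitrary: P)
  case 0 then show ?case by (simp add: cnt_def)
next
  case (Suc c)
  have "cnt P (Suc c * w) w j = cnt P (w + c * w) w j" by simp
  also have "\<dots> = cnt P w w j + cnt (P + w) (c * w) w j" by (rule cnt_add)
  also have "\<dots> = 1 + c" using Suc by (simp add: cnt_window)
  finally show ?case by simp
qed

lemma cnt_cap: "0 < w \<Longrightarrow> len \<le> c * w \<Longrightarrow> cnt P len w j \<le> c"
proof (cases "j < w")
  case True
  assume "len \<le> c * w"
  then have "cnt P len w j \<le> cnt P (c * w) w j" by (rule cnt_mono)
  then show ?thesis using cnt_mult[OF True] by simp
next
  case False
  assume "0 < w"
  then have "cnt P len w j = 0" unfolding cnt_def using False by (intro sum.neutral) auto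
  then show ?thesis by simp
qed

lemma cnt_rowsum: "0 < w \<Longrightarrow> (\<Sum>j<w. cnt P len w j) = len"
proof -
  assume w: "0 < w"
  have "(\<Sum>j<w. cnt P len w j) = (\<Sum>t<len. \<Sum>j<w. if (P + t) mod w = j then 1 else 0)"
    unfolding cnt_def by (rule sum.swap)
  also have "\<dots> = (\<Sum>t<len. 1)"
    using w by (intro sum.cong) (simp_all add: sum.delta)
  finally show ?thesis by simp
qed

definition pre :: "(nat \<Rightarrow> nat) \<Rightarrow> nat \<Rightarrow> nat" where
  "pre \<rho> i = (\<Sum>i'<i. \<rho> i')"

lemma cnt_colsum: "(\<Sum>i<s. cnt (pre \<rho> i) (\<rho> i) w j) = cnt 0 (\<Sum>i<s. \<rho> i) w j"
proof (induction s)
  case 0 then show ?case by (simp add: cnt_def)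
next
  case (Suc s)
  then show ?case using cnt_add[of 0 "\<Sum>i<s. \<rho> i" "\<rho> s" w j]
    by (simp add: pre_def)
qed


lemma hall:
  assumes "finite I" and "\<forall>i\<in>I. finite (S i)"
    and "\<forall>J\<subseteq>I. card J \<le> card (\<Union> (S ` J))"
  shows "\<exists>f. inj_on f I \<and> (\<forall>i\<in>I. f i \<in> S i)"
  using assms
proof (induction "card I" arbitrary: I S rule: less_induct)
  case less
  note fin = less.prems(1) and finS = less.prems(2) and H = less.prems(3)
  show ?case
  proof (cases "\<exists>J. J \<subseteq> I \<and> J \<noteq> {} \<and> J \<noteq> I \<and> card (\<Union> (S ` J)) = card J")
    case True
    then obtain J where J: "J \<subseteq> I" "J \<noteq> {}" "J \<noteq> I" "card (\<Union> (S ` J)) = card J" by blast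
    have finJ: "finite J" using J(1) fin finite_subset by blast
    have cJ: "card J < card I" using J(1,3) fin by (meson psubsetI psubset_card_mono)
    obtain f1 where f1: "inj_on f1 J" "\<forall>i\<in>J. f1 i \<in> S i"
    proof -
      have "\<exists>f. inj_on f J \<and> (\<forall>i\<in>J. f i \<in> S i)"
      proof (rule less.hyps[OF cJ finJ])
        show "\<forall>i\<in>J. finite (S i)" using finS J(1) by blast
        show "\<forall>Ja\<subseteq>J. card Ja \<le> card (\<Union> (S ` Ja))" using H J(1) by blast
      qed
      then show ?thesis using that by blast
    qed
    define U where "U = \<Union> (S ` J)"
    have finU: "finite U" unfolding U_def using finJ finS J(1) by auto
    define S' where "S' i = S i - U" for i
    have cIJ: "card (I - J) < card I" using J(1,2) fin
    proof -
      have "card (I - J) = card I - card J" by (rule card_Diff_subset[OF finJ J(1)])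
      moreover have "0 < card J" using finJ J(2) by (simp add: card_gt_0_iff)
      moreover have "card J \<le> card I" using J(1) fin by (simp add: card_mono)
      ultimately show ?thesis by linarith
    qed
    have H2: "\<forall>K\<subseteq>I - J. card K \<le> card (\<Union> (S' ` K))"
    proof (intro allI impI)
      fix K assume K: "K \<subseteq> I - J"
      have finK: "finite K" using K fin finite_subset by blast
      have "K \<union> J \<subseteq> I" using K J(1) by auto
      then have "card (K \<union> J) \<le> card (\<Union> (S ` (K \<union> J)))" using H by blast
      moreover have "card (K \<union> J) = card K + card J"
        using K finK finJ by (subst card_Un_disjoint) auto
      moreover have "\<Union> (S ` (K \<union> J)) = \<Union> (S' ` K) \<union> U"
        unfolding S'_def U_def by auto
      moreover have "card (\<Union> (S' ` K) \<union> U) = card (\<Union> (S' ` K)) + card U"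
        using finK finS K finU by (subst card_Un_disjoint) (auto simp: S'_def)
      ultimately have "card K + card J \<le> card (\<Union> (S' ` K)) + card U"
        by (metis U_def)
      then show "card K \<le> card (\<Union> (S' ` K))" using J(4) unfolding U_def by linarith
    qed
    obtain f2 where f2: "inj_on f2 (I - J)" "\<forall>i\<in>I - J. f2 i \<in> S' i"
      using less.hyps[OF cIJ _ _ H2] fin finS by (auto simp: S'_def)
    define f where "f i = (if i \<in> J then f1 i else f2 i)" for i
    have "inj_on f I"
    proof (rule inj_onI)
      fix a b assume ab: "a \<in> I" "b \<in> I" "f a = f b"
      show "a = b"
      proof (cases "a \<in> J"; cases "b \<in> J")
        assume "a \<in> J" "b \<in> J" then show ?thesis using ab f1(1) by (auto simp: f_def inj_on_def)
      next
        assume "a \<notin> J" "b \<notin> J" then show ?thesis using ab f2(1) by (auto simp: f_def inj_on_def)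
      next
        assume a: "a \<in> J" "b \<notin> J"
        then have "f a \<in> U" using f1 by (auto simp: f_def U_def)
        moreover have "f b \<notin> U" using a ab(2) f2 by (auto simp: f_def S'_def)
        ultimately show ?thesis using ab by simp
      next
        assume a: "a \<notin> J" "b \<in> J"
        then have "f b \<in> U" using f1 by (auto simp: f_def U_def)
        moreover have "f a \<notin> U" using a ab(1) f2 by (auto simp: f_def S'_def)
        ultimately show ?thesis using ab by simp
      qed
    qed
    moreover have "\<forall>i\<in>I. f i \<in> S i" using f1 f2 by (auto simp: f_def S'_def)
    ultimately show ?thesis by blast
  next
    case False
    show ?thesis
    proof (cases "I = {}")
      case True then show ?thesis by auto
    next
      case ne: False
      then obtain i0 where i0: "i0 \<in> I" by blast
      have "{i0} \<subseteq> I" using i0 by auto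
      then have "card {i0} \<le> card (\<Union> (S ` {i0}))" using H by blast
      then have "1 \<le> card (S i0)" by simp
      then obtain e where e: "e \<in> S i0" by (metis card_0_eq finS i0 ex_in_conv not_one_le_zero)
      define S' where "S' i = S i - {e}" for i
      have cI: "card (I - {i0}) < card I"
      proof -
        have "0 < card I" using i0 fin card_gt_0_iff by blast
        moreover have "card (I - {i0}) = card I - 1" using i0 fin by simp
        ultimately show ?thesis by linarith
      qed
      have H2: "\<forall>K\<subseteq>I - {i0}. card K \<le> card (\<Union> (S' ` K))"
      proof (intro allI impI)
        fix K assume K: "K \<subseteq> I - {i0}"
        show "card K \<le> card (\<Union> (S' ` K))"
        proof (cases "K = {}")
          case True then show ?thesis by simp
        next
          case Kne: False
          have finK: "finite K" using K fin finite_subset by blast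
          have "K \<noteq> I" using K i0 by auto
          then have "card (\<Union> (S ` K)) \<noteq> card K" using False K Kne by auto
          moreover have "card K \<le> card (\<Union> (S ` K))" using H K by auto
          ultimately have "card K + 1 \<le> card (\<Union> (S ` K))" by linarith
          moreover have "\<Union> (S' ` K) = \<Union> (S ` K) - {e}" unfolding S'_def by auto
          moreover have "card (\<Union> (S ` K) - {e}) \<ge> card (\<Union> (S ` K)) - 1"
            using diff_card_le_card_Diff[of "{e}" "\<Union> (S ` K)"] by simp
          ultimately show ?thesis by (metis add_diff_cancel_right' diff_le_mono order_trans)
        qed
      qed
      obtain f2 where f2: "inj_on f2 (I - {i0})" "\<forall>i\<in>I - {i0}. f2 i \<in> S' i"
        using less.hyps[OF cI _ _ H2] fin finS by (auto simp: S'_def)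
      define f where "f = f2(i0 := e)"
      have "inj_on f I"
      proof -
        have "inj_on f (I - {i0})" using f2(1) unfolding f_def inj_on_def by auto
        moreover have "f i0 \<notin> f ` (I - {i0})" using f2(2) by (auto simp: f_def S'_def)
        ultimately have "inj_on f (insert i0 (I - {i0}))" by (simp only: inj_on_insert) simp
        then show ?thesis using i0 by (simp add: insert_absorb)
      qed
      moreover have "\<forall>i\<in>I. f i \<in> S i" using f2(2) e by (auto simp: f_def S'_def)
      ultimately show ?thesis by blast
    qed
  qed
qed


lemma ind_sum: "J \<subseteq> {..<(t::nat)} \<Longrightarrow> (\<Sum>i<t. (if i \<in> J then 1 else 0 :: int)) = int (card J)"
proof -
  assume J: "J \<subseteq> {..<t}"
  have "(\<Sum>i\<in>{i\<in>{..<t}. i \<in> J}. 1) = (\<Sum>i<t. (if i \<in> J then 1 else 0 :: int))"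
    by (rule sum.inter_filter) simp
  then have "(\<Sum>i<t. (if i \<in> J then 1 else 0 :: int)) = (\<Sum>i\<in>{i\<in>{..<t}. i \<in> J}. 1)" by simp
  also have "{i\<in>{..<t}. i \<in> J} = J" using J by auto
  finally show ?thesis by simp
qed

lemma egervary:
  fixes a :: "nat \<Rightarrow> nat \<Rightarrow> nat" and t :: nat
  shows "\<exists>\<sigma> u v. inj_on \<sigma> {..<t} \<and> \<sigma> ` {..<t} \<subseteq> {..<t}
     \<and> (\<forall>i<t. \<forall>j<t. int (a i j) \<le> u i + v j)
     \<and> (\<Sum>i<t. int (a i (\<sigma> i))) = (\<Sum>i<t. u i) + (\<Sum>j<t. v j)"
proof -
  define cov where "cov u v \<longleftrightarrow> (\<forall>i<t. \<forall>j<t. int (a i j) \<le> u i + v j)" for u v :: "nat \<Rightarrow> int"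
  define val where "val u v = (\<Sum>i<t. u i) + (\<Sum>j<t. v j)" for u v :: "nat \<Rightarrow> int"
  have nonneg: "0 \<le> val u v" if "cov u v" for u v
  proof -
    have "val u v = (\<Sum>i<t. u i + v i)" unfolding val_def by (simp add: sum.distrib)
    also have "\<dots> \<ge> (\<Sum>i<t. int (a i i))" using that unfolding cov_def by (intro sum_mono) auto
    moreover have "0 \<le> (\<Sum>i<t. int (a i i))" by (simp add: sum_nonneg)
    ultimately show ?thesis by linarith
  qed
  define M where "M = (\<Sum>i<t. \<Sum>j<t. a i j)"
  have "cov (\<lambda>_. int M) (\<lambda>_. 0)"
    unfolding cov_def
  proof (intro allI impI)
    fix i j assume ij: "i < t" "j < t"
    have "a i j \<le> (\<Sum>j<t. a i j)" using ij by (intro member_le_sum) auto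
    also have "\<dots> \<le> M" unfolding M_def using ij
      by (intro member_le_sum[where f = "\<lambda>i. \<Sum>j<t. a i j"]) auto
    finally show "int (a i j) \<le> int M + 0" by simp
  qed
  then have ex: "\<exists>N::nat. \<exists>u v. cov u v \<and> val u v = int N"
  proof -
    let ?w = "val (\<lambda>_. int M) (\<lambda>_. 0)"
    have "0 \<le> ?w" using nonneg \<open>cov (\<lambda>_. int M) (\<lambda>_. 0)\<close> by blast
    then have "cov (\<lambda>_. int M) (\<lambda>_. 0) \<and> ?w = int (nat ?w)" using \<open>cov (\<lambda>_. int M) (\<lambda>_. 0)\<close> by simp
    then show ?thesis by blast
  qed
  define N where "N = (LEAST N::nat. \<exists>u v. cov u v \<and> val u v = int N)"
  obtain u v where uv: "cov u v" "val u v = int N"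
    using LeastI_ex[OF ex] unfolding N_def by blast
  have minimal: "val u v \<le> val u' v'" if "cov u' v'" for u' v'
  proof (rule ccontr)
    assume "\<not> val u v \<le> val u' v'"
    then have lt: "nat (val u' v') < N" using uv(2) nonneg[OF that] by linarith
    have "\<exists>u v. cov u v \<and> val u v = int (nat (val u' v'))" using that nonneg[OF that] by auto
    then have "N \<le> nat (val u' v')" unfolding N_def by (rule Least_le)
    then show False using lt by simp
  qed
  define S where "S i = {j \<in> {..<t}. int (a i j) = u i + v j}" for i
  have hallc: "\<forall>J\<subseteq>{..<t}. card J \<le> card (\<Union> (S ` J))"
  proof (intro allI impI, rule ccontr)
    fix J assume J: "J \<subseteq> {..<t}" and neg: "\<not> card J \<le> card (\<Union> (S ` J))"
    define NJ where "NJ = \<Union> (S ` J)"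
    have NJsub: "NJ \<subseteq> {..<t}" unfolding NJ_def S_def by auto
    define u' where "u' i = u i - (if i \<in> J then 1 else 0)" for i
    define v' where "v' j = v j + (if j \<in> NJ then 1 else 0)" for j
    have "cov u' v'"
      unfolding cov_def
    proof (intro allI impI)
      fix i j assume ij: "i < t" "j < t"
      have le: "int (a i j) \<le> u i + v j" using uv(1) ij unfolding cov_def by auto
      show "int (a i j) \<le> u' i + v' j"
      proof (cases "i \<in> J")
        case True
        show ?thesis
        proof (cases "j \<in> NJ")
          case True
          then show ?thesis using le \<open>i \<in> J\<close> by (simp add: u'_def v'_def)
        next
          case False
          then have "j \<notin> S i" using \<open>i \<in> J\<close> unfolding NJ_def by auto
          then have "int (a i j) \<noteq> u i + v j" using ij unfolding S_def by auto
          then show ?thesis using le True False by (simp add: u'_def v'_def)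
        qed
      next
        case False
        then show ?thesis using le by (simp add: u'_def v'_def)
      qed
    qed
    moreover have vv: "val u' v' = val u v - int (card J) + int (card NJ)"
    proof -
      have "(\<Sum>i<t. u' i) = (\<Sum>i<t. u i) - (\<Sum>i<t. (if i \<in> J then 1 else 0))"
        unfolding u'_def by (simp add: sum_subtractf)
      moreover have "(\<Sum>j<t. v' j) = (\<Sum>j<t. v j) + (\<Sum>j<t. (if j \<in> NJ then 1 else 0))"
        unfolding v'_def by (simp add: sum.distrib)
      ultimately show ?thesis unfolding val_def using ind_sum[OF J] ind_sum[OF NJsub] by simp
    qed
    moreover have "card NJ < card J" using neg unfolding NJ_def by simp
    ultimately show False using minimal[of u' v'] vv by linarith
  qed
  have "\<exists>f. inj_on f {..<t} \<and> (\<forall>i\<in>{..<t}. f i \<in> S i)"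
  proof (rule hall)
    show "finite {..<t}" by simp
    show "\<forall>i\<in>{..<t}. finite (S i)" unfolding S_def by simp
    show "\<forall>J\<subseteq>{..<t}. card J \<le> card (\<Union> (S ` J))" by (rule hallc)
  qed
  then obtain \<sigma> where \<sigma>: "inj_on \<sigma> {..<t}" "\<forall>i\<in>{..<t}. \<sigma> i \<in> S i" by blast
  have img: "\<sigma> ` {..<t} \<subseteq> {..<t}" using \<sigma>(2) unfolding S_def by auto
  have imgeq: "\<sigma> ` {..<t} = {..<t}" using endo_inj_surj[OF _ img \<sigma>(1)] by simp
  have "(\<Sum>i<t. int (a i (\<sigma> i))) = (\<Sum>i<t. u i + v (\<sigma> i))"
    using \<sigma>(2) unfolding S_def by (intro sum.cong) auto
  also have "\<dots> = (\<Sum>i<t. u i) + (\<Sum>i<t. v (\<sigma> i))" by (simp add: sum.distrib)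
  also have "(\<Sum>i<t. v (\<sigma> i)) = (\<Sum>j\<in>\<sigma> ` {..<t}. v j)"
    using sum.reindex[OF \<sigma>(1), of v] by simp
  also have "\<dots> = (\<Sum>j<t. v j)" using imgeq by simp
  finally show ?thesis using \<sigma>(1) img uv(1) unfolding cov_def by blast
qed


lemma split_sum: "(s::nat) \<le> t \<Longrightarrow> (\<Sum>i<t. f i) = (\<Sum>i<s. f i) + (\<Sum>i\<in>{s..<t}. f i)"
  by (simp add: lessThan_atLeast0 sum.atLeastLessThan_concat)

lemma tset_bound:
  fixes A :: "nat \<Rightarrow> nat \<Rightarrow> nat"
  assumes "inj_on f {..<s}" "f ` {..<s} \<subseteq> {..<t}"
  shows "(\<Sum>i<s. A i (f i)) \<le> (\<Sum>i<s. \<Sum>j<t. A i j)"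
proof (rule sum_mono)
  fix i assume "i \<in> {..<s}"
  then have "f i < t" using assms(2) by auto
  then show "A i (f i) \<le> (\<Sum>j<t. A i j)" by (intro member_le_sum) auto
qed

lemma tset_finite:
  fixes A :: "nat \<Rightarrow> nat \<Rightarrow> nat"
  shows "finite {(\<Sum>i<s. A i (f i)) | f. inj_on f {..<s} \<and> f ` {..<s} \<subseteq> {..<t}}"
proof (rule finite_subset)
  show "{(\<Sum>i<s. A i (f i)) | f. inj_on f {..<s} \<and> f ` {..<s} \<subseteq> {..<t}} \<subseteq> {..(\<Sum>i<s. \<Sum>j<t. A i j)}"
    using tset_bound by fastforce
qed simp

lemma tdet_ge:
  fixes A :: "nat \<Rightarrow> nat \<Rightarrow> nat"
  assumes "s \<le> t" "inj_on f {..<s}" "f ` {..<s} \<subseteq> {..<t}"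
  shows "(\<Sum>i<s. A i (f i)) \<le> tdet s t A"
  unfolding tdet_def using assms tset_finite[where s=s and A=A and t=t] by (auto intro!: Max_ge)

lemma tdet_le:
  fixes A :: "nat \<Rightarrow> nat \<Rightarrow> nat"
  assumes "s \<le> t" "\<And>f. inj_on f {..<s} \<Longrightarrow> f ` {..<s} \<subseteq> {..<t} \<Longrightarrow> (\<Sum>i<s. A i (f i)) \<le> c"
  shows "tdet s t A \<le> c"
proof -
  have ne: "{(\<Sum>i<s. A i (f i)) | f. inj_on f {..<s} \<and> f ` {..<s} \<subseteq> {..<t}} \<noteq> {}"
    using assms(1) by (auto intro!: exI[of _ id])
  show ?thesis unfolding tdet_def using assms ne tset_finite[where s=s and A=A and t=t] by (auto simp: Max_le_iff)
qed

lemma tdet_cover: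
  fixes U V :: "nat \<Rightarrow> nat" and A :: "nat \<Rightarrow> nat \<Rightarrow> nat"
  assumes "s \<le> t" "\<And>i j. i < s \<Longrightarrow> j < t \<Longrightarrow> A i j \<le> U i + V j"
  shows "tdet s t A \<le> (\<Sum>i<s. U i) + (\<Sum>j<t. V j)"
proof (rule tdet_le[OF assms(1)])
  fix f assume f: "inj_on f {..<s}" "f ` {..<s} \<subseteq> {..<t}"
  have "(\<Sum>i<s. A i (f i)) \<le> (\<Sum>i<s. U i + V (f i))"
    using f(2) assms(2) by (intro sum_mono) auto
  also have "\<dots> = (\<Sum>i<s. U i) + (\<Sum>i<s. V (f i))" by (simp add: sum.distrib)
  also have "(\<Sum>i<s. V (f i)) = (\<Sum>j\<in>f ` {..<s}. V j)" using sum.reindex[OF f(1), of V] by simp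
  also have "\<dots> \<le> (\<Sum>j<t. V j)" using f(2) by (intro sum_mono2) auto
  finally show "(\<Sum>i<s. A i (f i)) \<le> (\<Sum>i<s. U i) + (\<Sum>j<t. V j)" by simp
qed


lemma lower_bound:
  fixes k l m n q r S0 :: nat and A :: "nat \<Rightarrow> nat \<Rightarrow> nat"
  assumes "0 < k" and "k \<le> l" and "1 \<le> n"
    and m: "m = q * n + r" and "r < n"
    and AD: "A \<in> Dset k l m n"
    and Smin: "\<And>x y::int. int q * x * y + int r * (x * int l + y * int k) \<ge> int (k * l * n * r)
                     \<Longrightarrow> x \<ge> int (r * k) \<Longrightarrow> y \<ge> int (r * l) \<Longrightarrow> int S0 \<le> x + y"
  shows "n * k * q + min (n * k) S0 \<le> tdet (n * k) (n * l) A"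
proof -
  define s where "s = n * k"
  define t where "t = n * l"
  have st: "s \<le> t" unfolding s_def t_def using assms by simp
  have tpos: "0 < t" unfolding t_def using assms by simp
  have zero: "\<And>i j. s \<le> i \<Longrightarrow> A i j = 0" using AD unfolding Dset_def s_def by auto
  have rows: "\<And>i. i < s \<Longrightarrow> (\<Sum>j<t. A i j) = m * l" using AD unfolding Dset_def s_def t_def by auto
  have cols: "\<And>j. j < t \<Longrightarrow> (\<Sum>i<s. A i j) = m * k" using AD unfolding Dset_def s_def t_def by auto
  obtain \<sigma> u v where \<sigma>: "inj_on \<sigma> {..<t}" "\<sigma> ` {..<t} \<subseteq> {..<t}"
    and cov: "\<forall>i<t. \<forall>j<t. int (A i j) \<le> u i + v j"
    and eq: "(\<Sum>i<t. int (A i (\<sigma> i))) = (\<Sum>i<t. u i) + (\<Sum>j<t. v j)"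
    using egervary[of t A] by blast
  have "(\<Sum>i<t. int (A i (\<sigma> i))) = (\<Sum>i<s. int (A i (\<sigma> i))) + (\<Sum>i\<in>{s..<t}. int (A i (\<sigma> i)))"
    by (rule split_sum[OF st])
  also have "(\<Sum>i\<in>{s..<t}. int (A i (\<sigma> i))) = 0" using zero by simp
  finally have eq2: "int (\<Sum>i<s. A i (\<sigma> i)) = (\<Sum>i<t. u i) + (\<Sum>j<t. v j)" using eq by simp
  have "(\<Sum>i<s. A i (\<sigma> i)) \<le> tdet s t A"
  proof (rule tdet_ge[OF st])
    show "inj_on \<sigma> {..<s}" using inj_on_subset[OF \<sigma>(1), of "{..<s}"] st by auto
    show "\<sigma> ` {..<s} \<subseteq> {..<t}" using \<sigma>(2) st by (auto simp: image_subset_iff)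
  qed
  then have tdet_ge': "(\<Sum>i<t. u i) + (\<Sum>j<t. v j) \<le> int (tdet s t A)" using eq2 by linarith
  define b where "b = Min (v ` {..<t})"
  have "b \<in> v ` {..<t}" unfolding b_def using tpos by (intro Min_in) auto
  then obtain j0 where j0: "j0 < t" "v j0 = b" by auto
  have bmin: "\<And>j. j < t \<Longrightarrow> b \<le> v j" unfolding b_def by auto
  define \<alpha> where "\<alpha> i = u i + b - int q" for i
  define \<beta> where "\<beta> j = v j - b" for j
  have Ale: "\<And>i j. i < s \<Longrightarrow> j < t \<Longrightarrow> int (A i j) \<le> int q + \<alpha> i + \<beta> j"
    using cov st unfolding \<alpha>_def \<beta>_def by fastforce
  have \<beta>nn: "\<And>j. j < t \<Longrightarrow> 0 \<le> \<beta> j" using bmin unfolding \<beta>_def by auto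
  have \<beta>0: "\<beta> j0 = 0" using j0 unfolding \<beta>_def by simp
  have key1: "int (s * q) + (\<Sum>i<s. \<alpha> i) + (\<Sum>j<t. \<beta> j) \<le> (\<Sum>i<t. u i) + (\<Sum>j<t. v j)"
  proof -
    have ub: "\<And>i. i \<in> {s..<t} \<Longrightarrow> - b \<le> u i"
    proof -
      fix i assume "i \<in> {s..<t}"
      then have "int (A i j0) \<le> u i + v j0" "A i j0 = 0" "i < t" using cov j0 zero by auto
      then show "- b \<le> u i" using j0 by simp
    qed
    have "(\<Sum>i\<in>{s..<t}. - b) \<le> (\<Sum>i\<in>{s..<t}. u i)" using ub by (intro sum_mono) auto
    then have h1: "- (int (t - s) * b) \<le> (\<Sum>i\<in>{s..<t}. u i)" by simp
    have h2: "(\<Sum>i<t. u i) = (\<Sum>i<s. u i) + (\<Sum>i\<in>{s..<t}. u i)" by (rule split_sum[OF st])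
    have h3: "(\<Sum>i<s. \<alpha> i) = (\<Sum>i<s. u i) + int s * b - int s * int q"
      unfolding \<alpha>_def by (simp add: sum.distrib sum_subtractf)
    have h4: "(\<Sum>j<t. \<beta> j) = (\<Sum>j<t. v j) - int t * b"
      unfolding \<beta>_def by (simp add: sum_subtractf)
    have h5: "int (t - s) = int t - int s" using st by simp
    show ?thesis using h1 h2 h3 h4 h5 by (simp add: algebra_simps)
  qed
  define X where "X = (\<Sum>i<s. \<alpha> i)"
  define Y where "Y = (\<Sum>j<t. \<beta> j)"
  have Ynn: "0 \<le> Y" unfolding Y_def using \<beta>nn by (intro sum_nonneg) auto
  have mk: "int (m * k) = int s * int q + int (r * k)" unfolding s_def m by (simp add: algebra_simps)
  have ml: "int (m * l) = int t * int q + int (r * l)" unfolding t_def m by (simp add: algebra_simps)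
  have colX: "int (r * k) \<le> X"
  proof -
    have "int (m * k) = (\<Sum>i<s. int (A i j0))" using cols[OF j0(1)] by (simp flip: of_nat_sum)
    also have "\<dots> \<le> (\<Sum>i<s. int q + \<alpha> i + \<beta> j0)" using Ale j0 by (intro sum_mono) auto
    also have "\<dots> = int s * int q + X" unfolding X_def using \<beta>0 by (simp add: sum.distrib)
    finally show ?thesis using mk by simp
  qed
  have rowb: "\<And>i. i < s \<Longrightarrow> int (m * l) \<le> int t * (int q + \<alpha> i) + Y"
  proof -
    fix i assume i: "i < s"
    have "int (m * l) = (\<Sum>j<t. int (A i j))" using rows[OF i] by (simp flip: of_nat_sum)
    also have "\<dots> \<le> (\<Sum>j<t. int q + \<alpha> i + \<beta> j)" using Ale i by (intro sum_mono) auto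
    also have "\<dots> = int t * (int q + \<alpha> i) + Y" unfolding Y_def by (simp add: sum.distrib algebra_simps)
    finally show "int (m * l) \<le> int t * (int q + \<alpha> i) + Y" .
  qed
  have mn1: "int (min (n * k) S0) \<le> int (n * k)" "int (min (n * k) S0) \<le> int S0"
    by (metis of_nat_le_iff min.cobounded1) (metis of_nat_le_iff min.cobounded2)
  have main: "int (min (n * k) S0) \<le> X + Y"
  proof (cases "\<exists>i<s. \<alpha> i < 0")
    case True
    then obtain i1 where i1: "i1 < s" "\<alpha> i1 \<le> -1" by auto
    have "int t * (int q + \<alpha> i1) \<le> int t * (int q - 1)" using i1 by (intro mult_left_mono) auto
    then have "int (m * l) \<le> int t * (int q - 1) + Y" using rowb[OF i1(1)] by linarith
    then have "int t * int q + int (r * l) \<le> int t * int q - int t + Y" using ml by (simp add: algebra_simps)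
    then have "int t \<le> Y" by linarith
    moreover have "int (n * k) \<le> int t" using st unfolding s_def by linarith
    moreover have "0 \<le> int (r * k)" by simp
    ultimately have "int (n * k) \<le> X + Y" using colX by linarith
    then show ?thesis using mn1 by linarith
  next
    case False
    then have \<alpha>nn: "\<And>i. i < s \<Longrightarrow> 0 \<le> \<alpha> i" by force
    show ?thesis
    proof (cases "\<forall>i<s. 1 \<le> \<alpha> i")
      case True
      have "(\<Sum>i<s. (1::int)) \<le> X" unfolding X_def using True by (intro sum_mono) auto
      then have "int (n * k) \<le> X + Y" using Ynn unfolding s_def by simp
      then show ?thesis using mn1 by linarith
    next
      case False
      then obtain i0 where i0: "i0 < s" "\<alpha> i0 = 0" using \<alpha>nn by force
      have rowY: "int (r * l) \<le> Y" using rowb[OF i0(1)] i0(2) ml by simp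
      define XX where "XX = {i\<in>{..<s}. 0 < \<alpha> i}"
      define YY where "YY = {j\<in>{..<t}. 0 < \<beta> j}"
      define XC where "XC = {i\<in>{..<s}. \<alpha> i = 0}"
      define YC where "YC = {j\<in>{..<t}. \<beta> j = 0}"
      have XXle: "int (card XX) \<le> X"
      proof -
        have "int (card XX) = (\<Sum>i\<in>XX. 1)" by simp
        also have "\<dots> \<le> (\<Sum>i\<in>XX. \<alpha> i)" unfolding XX_def by (intro sum_mono) auto
        also have "\<dots> \<le> X" unfolding X_def XX_def using \<alpha>nn by (intro sum_mono2) auto
        finally show ?thesis .
      qed
      have YYle: "int (card YY) \<le> Y"
      proof -
        have "int (card YY) = (\<Sum>j\<in>YY. 1)" by simp
        also have "\<dots> \<le> (\<Sum>j\<in>YY. \<beta> j)" unfolding YY_def by (intro sum_mono) auto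
        also have "\<dots> \<le> Y" unfolding Y_def YY_def using \<beta>nn by (intro sum_mono2) auto
        finally show ?thesis .
      qed
      have XCc: "card XC + card XX = s"
      proof -
        have "XC \<union> XX = {..<s}" "XC \<inter> XX = {}" unfolding XC_def XX_def using \<alpha>nn by force+
        then show ?thesis by (metis card_Un_disjoint card_lessThan finite_Un finite_lessThan)
      qed
      have YCc: "card YC + card YY = t"
      proof -
        have "YC \<union> YY = {..<t}" "YC \<inter> YY = {}" unfolding YC_def YY_def using \<beta>nn by force+
        then show ?thesis by (metis card_Un_disjoint card_lessThan finite_Un finite_lessThan)
      qed
      have YCYY: "YC \<union> YY = {..<t}" "YC \<inter> YY = {}" unfolding YC_def YY_def using \<beta>nn by force+
      have blk1: "(\<Sum>i\<in>XC. \<Sum>j\<in>YC. A i j) \<le> card XC * card YC * q"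
      proof -
        have "(\<Sum>i\<in>XC. \<Sum>j\<in>YC. A i j) \<le> (\<Sum>i\<in>XC. \<Sum>j\<in>YC. q)"
        proof (intro sum_mono)
          fix i j assume ij: "i \<in> XC" "j \<in> YC"
          then have ij2: "i < s" "j < t" "\<alpha> i = 0" "\<beta> j = 0" unfolding XC_def YC_def by auto
          then have "int (A i j) \<le> int q + \<alpha> i + \<beta> j" "\<alpha> i = 0" "\<beta> j = 0"
            using Ale[OF ij2(1,2)] by auto
          then show "A i j \<le> q" by simp
        qed
        then show ?thesis by simp
      qed
      have blk2: "card XC * (m * l) \<le> (\<Sum>i\<in>XC. \<Sum>j\<in>YC. A i j) + card YY * (m * k)"
      proof -
        have "card XC * (m * l) = (\<Sum>i\<in>XC. \<Sum>j<t. A i j)"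
          using rows unfolding XC_def by simp
        also have "\<dots> = (\<Sum>i\<in>XC. (\<Sum>j\<in>YC. A i j) + (\<Sum>j\<in>YY. A i j))"
        proof (rule sum.cong)
          fix i
          have "finite YC" "finite YY" unfolding YC_def YY_def by auto
          then show "(\<Sum>j<t. A i j) = (\<Sum>j\<in>YC. A i j) + (\<Sum>j\<in>YY. A i j)"
            using sum.union_disjoint[of YC YY "A i"] YCYY by simp
        qed simp
        also have "\<dots> = (\<Sum>i\<in>XC. \<Sum>j\<in>YC. A i j) + (\<Sum>i\<in>XC. \<Sum>j\<in>YY. A i j)"
          by (simp add: sum.distrib)
        also have "(\<Sum>i\<in>XC. \<Sum>j\<in>YY. A i j) \<le> (\<Sum>i<s. \<Sum>j\<in>YY. A i j)"
          unfolding XC_def by (intro sum_mono2) auto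
        also have "\<dots> = (\<Sum>j\<in>YY. \<Sum>i<s. A i j)" by (rule sum.swap)
        also have "\<dots> = card YY * (m * k)" using cols unfolding YY_def by simp
        finally show ?thesis by simp
      qed
      define x' where "x' = int (card XX)"
      define y' where "y' = int (card YY)"
      have ineq: "int (card XC) * int (m * l) \<le> int (card XC) * int (card YC) * int q + y' * int (m * k)"
      proof -
        have "card XC * (m * l) \<le> card XC * card YC * q + card YY * (m * k)" using blk1 blk2 by linarith
        then have "int (card XC * (m * l)) \<le> int (card XC * card YC * q + card YY * (m * k))"
          by (simp only: of_nat_le_iff)
        then show ?thesis unfolding y'_def by (simp only: of_nat_mult of_nat_add)
      qed
      have cXC: "int (card XC) = int s - x'" using XCc unfolding x'_def by linarith
      have cYC: "int (card YC) = int t - y'" using YCc unfolding y'_def by linarith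
      have quad: "int q * x' * y' + int r * (x' * int l + y' * int k) \<ge> int (k * l * n * r)"
      proof -
        have "(int s - x') * (int t * int q + int (r * l)) \<le> (int s - x') * (int t - y') * int q + y' * (int s * int q + int (r * k))"
          using ineq cXC cYC ml mk by simp
        then show ?thesis unfolding s_def t_def by (simp add: algebra_simps)
      qed
      have x'nn: "0 \<le> x'" "0 \<le> y'" unfolding x'_def y'_def by auto
      have "int q * x' * y' \<le> int q * X * Y"
        using XXle YYle x'nn unfolding x'_def[symmetric] y'_def[symmetric]
        by (intro mult_mono) (auto intro: mult_left_mono)
      moreover have "int r * (x' * int l + y' * int k) \<le> int r * (X * int l + Y * int k)"
        using XXle YYle unfolding x'_def[symmetric] y'_def[symmetric]
        by (intro mult_left_mono add_mono mult_right_mono) auto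
      ultimately have "int q * X * Y + int r * (X * int l + Y * int k) \<ge> int (k * l * n * r)"
        using quad by linarith
      then have "int S0 \<le> X + Y" using Smin colX rowY by blast
      then show ?thesis using mn1 by linarith
    qed
  qed
  have "int (n * k * q + min (n * k) S0) \<le> int (s * q) + X + Y" using main unfolding s_def by simp
  also have "\<dots> \<le> int (tdet s t A)" using key1 tdet_ge' unfolding X_def Y_def by linarith
  finally have "n * k * q + min (n * k) S0 \<le> tdet s t A" by (simp only: of_nat_le_iff)
  then show ?thesis unfolding s_def t_def .
qed


definition mat :: "nat \<Rightarrow> nat \<Rightarrow> nat \<Rightarrow> nat \<Rightarrow> (nat \<Rightarrow> nat) \<Rightarrow> nat \<Rightarrow> nat \<Rightarrow> nat" where
  "mat s t y R \<rho> i j =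
     (if i < s \<and> j < y then cnt (pre \<rho> i) (\<rho> i) y j
      else if i < s \<and> y \<le> j \<and> j < t then cnt (pre (\<lambda>i. R - \<rho> i) i) (R - \<rho> i) (t - y) (j - y)
      else 0)"

lemma mat_zero: "s \<le> i \<or> t \<le> j \<Longrightarrow> y < t \<Longrightarrow> mat s t y R \<rho> i j = 0"
  unfolding mat_def by auto

lemma mat_rows:
  assumes "y < t" "i < s" "\<rho> i \<le> R" "y = 0 \<Longrightarrow> \<rho> i = 0"
  shows "(\<Sum>j<t. mat s t y R \<rho> i j) = R"
proof -
  have "(\<Sum>j<t. mat s t y R \<rho> i j) = (\<Sum>j<y. mat s t y R \<rho> i j) + (\<Sum>j\<in>{y..<t}. mat s t y R \<rho> i j)"
    using assms(1) by (intro split_sum) simp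
  also have "(\<Sum>j<y. mat s t y R \<rho> i j) = (\<Sum>j<y. cnt (pre \<rho> i) (\<rho> i) y j)"
    using assms(2) by (intro sum.cong) (auto simp: mat_def)
  also have "\<dots> = \<rho> i"
  proof (cases "y = 0")
    case True then show ?thesis using assms(4) by simp
  next
    case False then show ?thesis by (simp add: cnt_rowsum)
  qed
  also have "(\<Sum>j\<in>{y..<t}. mat s t y R \<rho> i j) = (\<Sum>j\<in>{y..<t}. cnt (pre (\<lambda>i. R - \<rho> i) i) (R - \<rho> i) (t - y) (j - y))"
    using assms(2) by (intro sum.cong) (auto simp: mat_def)
  also have "\<dots> = (\<Sum>j'\<in>{0..<t - y}. cnt (pre (\<lambda>i. R - \<rho> i) i) (R - \<rho> i) (t - y) j')"
    by (subst sum.atLeastLessThan_shift_0) (simp add: comp_def)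
  also have "\<dots> = R - \<rho> i" using assms(1) by (simp add: atLeast0LessThan cnt_rowsum)
  finally show ?thesis using assms(3) by simp
qed

lemma mat_cols:
  assumes "y < t" "j < t" "\<forall>i<s. \<rho> i \<le> R" "(\<Sum>i<s. \<rho> i) = y * C" "s * R = t * C"
  shows "(\<Sum>i<s. mat s t y R \<rho> i j) = C"
proof (cases "j < y")
  case True
  have "(\<Sum>i<s. mat s t y R \<rho> i j) = (\<Sum>i<s. cnt (pre \<rho> i) (\<rho> i) y j)"
    using True by (intro sum.cong) (auto simp: mat_def)
  also have "\<dots> = cnt 0 (\<Sum>i<s. \<rho> i) y j" by (rule cnt_colsum)
  also have "\<dots> = cnt 0 (C * y) y j" using assms(4) by (simp add: mult.commute)
  also have "\<dots> = C" using True by (rule cnt_mult)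
  finally show ?thesis .
next
  case False
  have "(\<Sum>i<s. mat s t y R \<rho> i j) = (\<Sum>i<s. cnt (pre (\<lambda>i. R - \<rho> i) i) (R - \<rho> i) (t - y) (j - y))"
    using False assms(2) by (intro sum.cong) (auto simp: mat_def)
  also have "\<dots> = cnt 0 (\<Sum>i<s. R - \<rho> i) (t - y) (j - y)" by (rule cnt_colsum)
  also have "(\<Sum>i<s. R - \<rho> i) = s * R - y * C"
    using assms(3,4) by (subst sum_subtractf_nat) auto
  also have "\<dots> = C * (t - y)" using assms(5) by (simp add: right_diff_distrib' mult.commute)
  also have "cnt 0 (C * (t - y)) (t - y) (j - y) = C" using False assms(2) by (intro cnt_mult) auto
  finally show ?thesis .
qed

lemma mat_capY:
  assumes "i < s" "j < y" "\<rho> i \<le> c * y"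
  shows "mat s t y R \<rho> i j \<le> c"
  using assms cnt_cap[of y "\<rho> i" c] by (auto simp: mat_def)

lemma mat_capY':
  assumes "i < s" "y \<le> j" "j < t" "R - \<rho> i \<le> c * (t - y)"
  shows "mat s t y R \<rho> i j \<le> c"
  using assms cnt_cap[of "t - y" "R - \<rho> i" c] by (auto simp: mat_def)

lemma mat_D:
  assumes "0 < k" "1 \<le> n" "k \<le> l" "y < n * l" "\<forall>i<n*k. \<rho> i \<le> m * l" "(\<Sum>i<n*k. \<rho> i) = y * (m * k)"
  shows "mat (n*k) (n*l) y (m*l) \<rho> \<in> Dset k l m n"
proof -
  have eqst: "n * k * (m * l) = n * l * (m * k)" by simp
  have y0: "\<And>i. y = 0 \<Longrightarrow> i < n * k \<Longrightarrow> \<rho> i = 0" using assms(6) by simp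
  show ?thesis unfolding Dset_def
    using mat_zero[OF _ assms(4)] mat_rows[OF assms(4)] mat_cols[OF assms(4) _ assms(5,6) eqst] assms(5) y0
    by auto
qed


lemma ind_lt_sum: "c \<le> x \<Longrightarrow> (\<Sum>i<x. (if i < c then 1 else 0 :: nat)) = c"
proof -
  assume c: "c \<le> x"
  have "(\<Sum>i\<in>{i\<in>{..<x}. i < c}. 1) = (\<Sum>i<x. (if i < c then 1 else 0 :: nat))"
    by (rule sum.inter_filter) simp
  moreover have "{i\<in>{..<x}. i < c} = {..<c}" using c by auto
  ultimately show ?thesis by simp
qed

lemma dm_sum: "0 < x \<Longrightarrow> (\<Sum>i<x. D div x + (if i < D mod x then 1 else 0)) = (D::nat)"
proof -
  assume x: "0 < x"
  have "(\<Sum>i<x. D div x + (if i < D mod x then 1 else 0)) = x * (D div x) + (\<Sum>i<x. (if i < D mod x then 1 else 0))"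
    by (simp add: sum.distrib)
  also have "(\<Sum>i<x. (if i < D mod x then 1 else 0)) = D mod x"
    using x by (intro ind_lt_sum) (simp add: less_imp_le)
  finally show ?thesis by simp
qed

lemma dm_le:
  fixes D x c :: nat
  assumes "i < x" "D \<le> x * c"
  shows "D div x + (if i < D mod x then 1 else 0) \<le> c"
proof -
  have x: "0 < x" using assms by simp
  have d1: "D div x \<le> c" using div_le_mono[OF assms(2), of x] x by simp
  have dm: "x * (D div x) + D mod x = D" by simp
  show ?thesis
  proof (cases "i < D mod x")
    case True
    have "D div x < c"
    proof (rule ccontr)
      assume "\<not> D div x < c"
      then have "x * c \<le> x * (D div x)" by simp
      then show False using dm True assms(2) by linarith
    qed
    then show ?thesis using True by simp
  next
    case False then show ?thesis using d1 by simp
  qed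
qed

lemma dm_ge:
  fixes D x c :: nat
  assumes "0 < x" "x * c \<le> D"
  shows "c \<le> D div x"
  using div_le_mono[OF assms(2), of x] assms(1) by simp

lemma Dset_finite: "finite (Dset k l m n)"
proof -
  define s where "s = n * k"
  define t where "t = n * l"
  define B where "B = {A :: nat \<Rightarrow> nat \<Rightarrow> nat. \<forall>i j. (s \<le> i \<or> t \<le> j \<longrightarrow> A i j = 0) \<and> A i j \<le> m * l}"
  have sub: "Dset k l m n \<subseteq> B"
  proof
    fix A assume A: "A \<in> Dset k l m n"
    have "A i j \<le> m * l" for i j
    proof (cases "i < s \<and> j < t")
      case True
      then have "A i j \<le> (\<Sum>j<t. A i j)" by (intro member_le_sum) auto
      also have "\<dots> = m * l" using A True unfolding Dset_def s_def t_def by auto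
      finally show ?thesis .
    next
      case False then show ?thesis using A unfolding Dset_def s_def t_def by auto
    qed
    then show "A \<in> B" using A unfolding B_def Dset_def s_def t_def by auto
  qed
  define F where "F A = (\<lambda>p\<in>{..<s} \<times> {..<t}. A (fst p) (snd p))" for A :: "nat \<Rightarrow> nat \<Rightarrow> nat"
  have inj: "inj_on F B"
  proof (rule inj_onI)
    fix A A' assume AA: "A \<in> B" "A' \<in> B" "F A = F A'"
    show "A = A'"
    proof (intro ext)
      fix i j
      show "A i j = A' i j"
      proof (cases "i < s \<and> j < t")
        case True
        then have "F A (i, j) = F A' (i, j)" using AA by simp
        then show ?thesis using True unfolding F_def by simp
      next
        case False then show ?thesis using AA unfolding B_def by auto
      qed
    qed
  qed
  have "F ` B \<subseteq> PiE ({..<s} \<times> {..<t}) (\<lambda>_. {..m * l})"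
    unfolding F_def B_def by (auto simp: PiE_def Pi_def)
  then have "finite (F ` B)" by (rule finite_subset) (intro finite_PiE, auto)
  then have "finite B" using inj by (rule finite_imageD)
  then show ?thesis using sub by (rule finite_subset[rotated])
qed


lemma upper_bound:
  fixes k l m n q r S0 :: nat
  assumes "0 < k" and "k \<le> l" and "1 \<le> n"
    and m: "m = q * n + r" and "r < n"
    and Sach: "\<exists>x y::int. int S0 = x + y
                     \<and> int q * x * y + int r * (x * int l + y * int k) \<ge> int (k * l * n * r)
                     \<and> x \<ge> int (r * k) \<and> y \<ge> int (r * l)"
    and Smin: "\<And>x y::int. int q * x * y + int r * (x * int l + y * int k) \<ge> int (k * l * n * r)
                     \<Longrightarrow> x \<ge> int (r * k) \<Longrightarrow> y \<ge> int (r * l) \<Longrightarrow> int S0 \<le> x + y"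
  shows "\<exists>A\<in>Dset k l m n. tdet (n * k) (n * l) A \<le> n * k * q + min (n * k) S0"
proof -
  define s where "s = n * k"
  define t where "t = n * l"
  have st: "s \<le> t" unfolding s_def t_def using assms by simp
  have tpos: "0 < t" unfolding t_def using assms by simp
  have mlt: "m * l \<le> (q + 1) * t"
  proof -
    have h: "m \<le> (q + 1) * n" using m assms(5) by simp
    have "m * l \<le> ((q + 1) * n) * l" by (rule mult_right_mono[OF h]) simp
    then show ?thesis unfolding t_def by (simp only: mult.assoc)
  qed
  show ?thesis
  proof (cases "n * k \<le> S0")
    case True
    define A where "A = mat s t 0 (m * l) (\<lambda>_. 0)"
    have AD: "A \<in> Dset k l m n" unfolding A_def s_def t_def
      by (rule mat_D) (use assms tpos[unfolded t_def] in auto)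
    have "tdet s t A \<le> (\<Sum>i<s. q + 1) + (\<Sum>j<t. 0)"
    proof (rule tdet_cover[OF st])
      fix i j assume ij: "i < s" "j < t"
      show "A i j \<le> q + 1 + 0" unfolding A_def
        using mat_capY'[OF ij(1) _ ij(2), of 0 "m * l" "\<lambda>_. 0" "q + 1"] mlt by simp
    qed
    then have "tdet s t A \<le> n * k * q + min (n * k) S0" using True unfolding s_def by simp
    then show ?thesis using AD unfolding s_def t_def by blast
  next
    case False
    then have Slt: "S0 < n * k" by simp
    obtain x y :: int where xy: "int S0 = x + y"
      "int q * x * y + int r * (x * int l + y * int k) \<ge> int (k * l * n * r)"
      "x \<ge> int (r * k)" "y \<ge> int (r * l)" using Sach by blast
    have x0: "0 \<le> x" "0 \<le> y" using xy(3,4) of_nat_0_le_iff order_trans by blast+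
    define xn where "xn = nat x"
    define yn where "yn = nat y"
    have xyn: "x = int xn" "y = int yn" unfolding xn_def yn_def using x0 by auto
    have S0eq: "S0 = xn + yn" using xy(1) xyn by simp
    have ynt: "yn < t" using Slt st S0eq unfolding s_def by simp
    have xns: "xn \<le> s" using Slt S0eq unfolding s_def by simp
    have mi: "int m = int q * int n + int r" using m by simp
    define D where "D = int q * x * y + int r * (x * int l + y * int k) - int (k * l * n * r)"
    have D0: "0 \<le> D" unfolding D_def using xy(2) by simp
    have rln: "int r * int l \<le> int n * int l" using assms(5) by (intro mult_right_mono) auto
    have Dub: "D \<le> x * ((int q + 2) * y)"
    proof (cases "x = int (r * k)")
      case True
      have "D = int r * int k * (int q * y + int r * int l + y - int n * int l)"
        unfolding D_def True by (simp add: algebra_simps)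
      also have "\<dots> \<le> int r * int k * ((int q + 2) * y)"
        using rln x0 by (intro mult_left_mono) (auto simp: algebra_simps)
      finally show ?thesis using True by simp
    next
      case False
      then have xgt: "x - 1 \<ge> int (r * k)" using xy(3) by simp
      have "D < int q * y + int r * int l"
      proof (rule ccontr)
        assume "\<not> D < int q * y + int r * int l"
        then have "int q * (x - 1) * y + int r * ((x - 1) * int l + y * int k) \<ge> int (k * l * n * r)"
          unfolding D_def by (simp add: algebra_simps)
        then have "int S0 \<le> (x - 1) + y" using Smin xgt xy(4) by blast
        then show False using xy(1) by simp
      qed
      also have "\<dots> \<le> (int q + 2) * y" using xy(4) x0 by (simp add: algebra_simps)
      also have "\<dots> \<le> x * ((int q + 2) * y)"
      proof -
        have x1: "1 \<le> x" using xgt by (smt (verit) of_nat_0_le_iff)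
        have nn: "0 \<le> (int q + 2) * y" using x0 by simp
        have "1 * ((int q + 2) * y) \<le> x * ((int q + 2) * y)" by (rule mult_right_mono[OF x1 nn])
        then show ?thesis by simp
      qed
      finally show ?thesis by simp
    qed
    have Dlb: "x * int (m * l) \<le> D + x * ((int q + 1) * (int t - y))"
    proof -
      have "D + x * ((int q + 1) * (int t - y)) - x * int (m * l) = (int t - y) * (x - int r * int k)"
        unfolding D_def t_def using mi by (simp add: algebra_simps)
      moreover have "0 \<le> (int t - y) * (x - int r * int k)"
        using ynt xyn xy(3) by (intro mult_nonneg_nonneg) auto
      ultimately show ?thesis by linarith
    qed
    have Dml: "D \<le> x * int (m * l)"
    proof -
      have "x * int (m * l) - D = (int t - y) * (int q * x + int r * int k)"
        unfolding D_def t_def using mi by (simp add: algebra_simps)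
      moreover have "0 \<le> (int t - y) * (int q * x + int r * int k)"
        using ynt xyn x0 by (intro mult_nonneg_nonneg) auto
      ultimately show ?thesis by linarith
    qed
    have Dsum: "D + (int s - x) * (int r * int l + int q * y) = y * int (m * k)"
      unfolding D_def s_def using mi by (simp add: algebra_simps)
    define Dn where "Dn = nat D"
    have DnD: "int Dn = D" unfolding Dn_def using D0 by simp
    have Dnub: "Dn \<le> xn * ((q + 2) * yn)"
    proof -
      have "int (xn * ((q + 2) * yn)) = x * ((int q + 2) * y)" using xyn by (simp add: algebra_simps)
      then have "int Dn \<le> int (xn * ((q + 2) * yn))" using Dub DnD by linarith
      then show ?thesis by (simp only: of_nat_le_iff)
    qed
    have Dnml: "Dn \<le> xn * (m * l)"
    proof -
      have "int Dn \<le> int (xn * (m * l))" using Dml DnD xyn by simp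
      then show ?thesis by (simp only: of_nat_le_iff)
    qed
    have Dnlb: "xn * (m * l) \<le> Dn + xn * ((q + 1) * (t - yn))"
    proof -
      have "int (t - yn) = int t - y" using ynt xyn by simp
      then have "int (Dn + xn * ((q + 1) * (t - yn))) = D + x * ((int q + 1) * (int t - y))"
        using DnD xyn by (simp only: of_nat_mult of_nat_add of_nat_1)
      moreover have "int (xn * (m * l)) = x * int (m * l)" using xyn by simp
      ultimately have "int (xn * (m * l)) \<le> int (Dn + xn * ((q + 1) * (t - yn)))" using Dlb by linarith
      then show ?thesis by (simp only: of_nat_le_iff)
    qed
    have Dnsum: "Dn + (s - xn) * (r * l + q * yn) = yn * (m * k)"
    proof -
      have "int (s - xn) = int s - x" using xns xyn by simp
      then have "int (Dn + (s - xn) * (r * l + q * yn)) = D + (int s - x) * (int r * int l + int q * y)"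
        using DnD xyn by (simp only: of_nat_mult of_nat_add)
      moreover have "int (yn * (m * k)) = y * int (m * k)" using xyn by simp
      ultimately have "int (Dn + (s - xn) * (r * l + q * yn)) = int (yn * (m * k))" using Dsum by linarith
      then show ?thesis by (simp only: of_nat_eq_iff)
    qed
    define \<rho> where "\<rho> i = (if i < xn then Dn div xn + (if i < Dn mod xn then 1 else 0) else r * l + q * yn)" for i
    have rsum: "(\<Sum>i<s. \<rho> i) = yn * (m * k)"
    proof -
      have "(\<Sum>i<s. \<rho> i) = (\<Sum>i<xn. \<rho> i) + (\<Sum>i\<in>{xn..<s}. \<rho> i)" by (rule split_sum[OF xns])
      also have "(\<Sum>i<xn. \<rho> i) = Dn"
      proof (cases "xn = 0")
        case True
        then show ?thesis using Dnub by simp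
      next
        case False
        have "(\<Sum>i<xn. \<rho> i) = (\<Sum>i<xn. Dn div xn + (if i < Dn mod xn then 1 else 0))"
          unfolding \<rho>_def by (intro sum.cong) auto
        also have "\<dots> = Dn" using False by (intro dm_sum) simp
        finally show ?thesis .
      qed
      also have "(\<Sum>i\<in>{xn..<s}. \<rho> i) = (\<Sum>i\<in>{xn..<s}. r * l + q * yn)"
        unfolding \<rho>_def by (intro sum.cong) auto
      also have "\<dots> = (s - xn) * (r * l + q * yn)" by simp
      finally show ?thesis using Dnsum by simp
    qed
    have ynl: "r * l \<le> yn"
    proof -
      have "int (r * l) \<le> int yn" using xy(4) xyn by simp
      then show ?thesis by (simp only: of_nat_le_iff)
    qed
    have mleq: "m * l = q * t + r * l" unfolding t_def m by (simp add: algebra_simps)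
    have rle: "\<forall>i<s. \<rho> i \<le> m * l"
    proof (intro allI impI)
      fix i assume i: "i < s"
      show "\<rho> i \<le> m * l"
      proof (cases "i < xn")
        case True
        then show ?thesis unfolding \<rho>_def using dm_le[OF True Dnml] by simp
      next
        case False
        have "q * yn \<le> q * t" using ynt by simp
        then show ?thesis unfolding \<rho>_def using False mleq by simp
      qed
    qed
    define A where "A = mat s t yn (m * l) \<rho>"
    have AD: "A \<in> Dset k l m n" unfolding A_def s_def t_def
      by (rule mat_D) (use assms ynt rle rsum in \<open>auto simp: s_def t_def\<close>)
    define U where "U i = (if i < xn then q + 1 else q)" for i
    define V where "V j = (if j < yn then 1 else (0::nat))" for j
    have "tdet s t A \<le> (\<Sum>i<s. U i) + (\<Sum>j<t. V j)"
    proof (rule tdet_cover[OF st])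
      fix i j assume ij: "i < s" "j < t"
      show "A i j \<le> U i + V j"
      proof (cases "i < xn")
        case ix: True
        have rlo: "Dn div xn \<le> \<rho> i" unfolding \<rho>_def using ix by simp
        show ?thesis
        proof (cases "j < yn")
          case True
          have "\<rho> i \<le> (q + 2) * yn" unfolding \<rho>_def using ix dm_le[OF ix Dnub] by simp
          then have "A i j \<le> q + 2" unfolding A_def by (rule mat_capY[OF ij(1) True])
          then show ?thesis using ix True by (simp add: U_def V_def)
        next
          case False
          have "xn * (m * l - (q + 1) * (t - yn)) \<le> Dn" using Dnlb by (simp add: diff_mult_distrib2)
          then have "m * l - (q + 1) * (t - yn) \<le> Dn div xn" using ix by (intro dm_ge) auto
          then have "m * l - \<rho> i \<le> (q + 1) * (t - yn)" using rlo by linarith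
          then have "A i j \<le> q + 1" unfolding A_def using False ij by (intro mat_capY') auto
          then show ?thesis using ix False by (simp add: U_def V_def)
        qed
      next
        case ix: False
        show ?thesis
        proof (cases "j < yn")
          case True
          have "\<rho> i \<le> (q + 1) * yn" unfolding \<rho>_def using ix ynl by simp
          then have "A i j \<le> q + 1" unfolding A_def by (rule mat_capY[OF ij(1) True])
          then show ?thesis using ix True by (simp add: U_def V_def)
        next
          case False
          have "m * l - \<rho> i \<le> q * (t - yn)" unfolding \<rho>_def using ix mleq by (simp add: diff_mult_distrib2)
          then have "A i j \<le> q" unfolding A_def using False ij by (intro mat_capY') auto
          then show ?thesis using ix False by (simp add: U_def V_def)
        qed
      qed
    qed
    also have "(\<Sum>i<s. U i) = s * q + xn"
    proof -
      have "(\<Sum>i<s. U i) = (\<Sum>i<s. q + (if i < xn then 1 else 0))" unfolding U_def by (intro sum.cong) auto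
      also have "\<dots> = s * q + (\<Sum>i<s. (if i < xn then 1 else 0))" by (simp add: sum.distrib)
      also have "(\<Sum>i<s. (if i < xn then 1 else 0)) = xn" using xns by (rule ind_lt_sum)
      finally show ?thesis .
    qed
    also have "(\<Sum>j<t. V j) = yn" unfolding V_def using ynt ind_lt_sum[of yn t] by simp
    finally have "tdet s t A \<le> n * k * q + min (n * k) S0" using Slt S0eq unfolding s_def by simp
    then show ?thesis using AD unfolding s_def t_def by blast
  qed
qed


theorem theorem3p4:
  fixes k l m n q r :: nat
  assumes "0 < k" and "k \<le> l" and "gcd k l = 1" and "1 \<le> n"
    and "m = q * n + r" and "r < n"
  shows "int (Lkl k l m n) =
           int (n * k * q)
           + min (int (n * k))
                 (LEAST s::int. \<exists>x y::int. s = x + y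
                     \<and> int q * x * y + int r * (x * int l + y * int k) \<ge> int (k * l * n * r)
                     \<and> x \<ge> int (r * k) \<and> y \<ge> int (r * l))"
proof -
  define Pr where "Pr s \<longleftrightarrow> (\<exists>x y::int. s = x + y
                     \<and> int q * x * y + int r * (x * int l + y * int k) \<ge> int (k * l * n * r)
                     \<and> x \<ge> int (r * k) \<and> y \<ge> int (r * l))" for s :: int
  have Pnn: "0 \<le> s" if hs: "Pr s" for s
  proof -
    obtain x y where "s = x + y" "x \<ge> int (r * k)" "y \<ge> int (r * l)" using hs unfolding Pr_def by blast
    moreover have "0 \<le> int (r * k)" "0 \<le> int (r * l)" by simp_all
    ultimately show ?thesis by linarith
  qed
  have Pex: "Pr (int (n * k + n * l))"
    unfolding Pr_def
  proof (intro exI conjI)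
    show "int (n * k + n * l) = int (n * k) + int (n * l)" by simp
    have "int (k * l * n * r) \<le> int r * (int (n * k) * int l + int (n * l) * int k)"
      by (simp add: algebra_simps)
    moreover have "0 \<le> int q * int (n * k) * int (n * l)" by simp
    ultimately show "int q * int (n * k) * int (n * l) + int r * (int (n * k) * int l + int (n * l) * int k) \<ge> int (k * l * n * r)"
      by linarith
    show "int (n * k) \<ge> int (r * k)" using assms(6) by (simp only: of_nat_le_iff) simp
    show "int (n * l) \<ge> int (r * l)" using assms(6) by (simp only: of_nat_le_iff) simp
  qed
  define S0 where "S0 = (LEAST N::nat. Pr (int N))"
  have PS0: "Pr (int S0)" unfolding S0_def by (rule LeastI[of _ "n * k + n * l"]) (rule Pex)
  have S0min: "int S0 \<le> s" if "Pr s" for s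
  proof -
    have "Pr (int (nat s))" using that Pnn[OF that] by simp
    then have "S0 \<le> nat s" unfolding S0_def by (rule Least_le)
    then show ?thesis using Pnn[OF that] by linarith
  qed
  have L: "(LEAST s::int. Pr s) = int S0" by (rule Least_equality) (use PS0 S0min in auto)
  have Sach: "\<exists>x y::int. int S0 = x + y
                     \<and> int q * x * y + int r * (x * int l + y * int k) \<ge> int (k * l * n * r)
                     \<and> x \<ge> int (r * k) \<and> y \<ge> int (r * l)" using PS0 unfolding Pr_def .
  have Smin: "int S0 \<le> x + y" if "int q * x * y + int r * (x * int l + y * int k) \<ge> int (k * l * n * r)"
     "x \<ge> int (r * k)" "y \<ge> int (r * l)" for x y :: int
    using S0min[of "x + y"] that unfolding Pr_def by blast
  define T where "T = n * k * q + min (n * k) S0"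
  obtain A0 where A0: "A0 \<in> Dset k l m n" "tdet (n * k) (n * l) A0 \<le> T"
    using upper_bound[OF assms(1,2,4,5,6) Sach Smin] unfolding T_def by blast
  have fin: "finite (tdet (n * k) (n * l) ` Dset k l m n)" using Dset_finite by simp
  have ne: "tdet (n * k) (n * l) ` Dset k l m n \<noteq> {}" using A0 by auto
  have "Lkl k l m n \<le> T"
    unfolding Lkl_def using Min_le[OF fin, of "tdet (n * k) (n * l) A0"] A0 by auto
  moreover have "T \<le> Lkl k l m n"
    unfolding Lkl_def using fin ne
    by (subst Min_ge_iff) (auto simp: T_def intro: lower_bound[OF assms(1,2,4,5,6) _ Smin])
  ultimately have LT: "Lkl k l m n = T" by simp
  have "(LEAST s::int. \<exists>x y::int. s = x + y
                     \<and> int q * x * y + int r * (x * int l + y * int k) \<ge> int (k * l * n * r)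
                     \<and> x \<ge> int (r * k) \<and> y \<ge> int (r * l)) = int S0"
    using L unfolding Pr_def .
  moreover have mm: "int (min (n * k) S0) = min (int (n * k)) (int S0)" by (simp only: min_def of_nat_le_iff) auto
  ultimately show ?thesis using LT unfolding T_def by (simp only: of_nat_add)
qed


end
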